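(* Let $\lambda\in P$ and let $\lambda'$ be an enlargement of $\lambda$. Then there is a finite sequence $\lambda=\nu^{(0)},\nu^{(1)},\dots,\nu^{(N)}=\lambda'$ such that for each $0\le a\le N-1$ one of the following holds: (i) $\nu^{(a+1)}=\omega^{\pm1}\nu^{(a)}$; (ii) $\nu^{(a+1)}=s_i\nu^{(a)}$ for some $i$ and $\nu^{(a+1)}\succ\nu^{(a)}$; (iii) $\nu^{(a+1)}=s_i\nu^{(a)}$ for some $i$, $\nu^{(a+1)}\prec\nu^{(a)}$, and $\nu^{(a+1)}$ is intertwined with $\nu^{(a)}$.
   Context: Let $P=\mathbb Z^n$. For $\lambda\in P$, $\rho(\lambda)$ is the unique permutation of $(\frac{n-1}2,\dots,-\frac{n-1}2)$ with $\rho(\lambda)_i>\rho(\lambda)_j$ iff $\lambda_i>\lambda_j$ or ($\lambda_i=\lambda_j$, $i<j$); let $(i_1,\dots,i_n)$ be the indices with $\rho(\lambda)_{i_a}=\frac{n+1}2-a$. $\omega\lambda=(\lambda_2,\dots,\lambda_n,\lambda_1+1)$, $s_i\lambda$ swaps $\lambda_i,\lambda_{i+1}$. $\lambda\succ\mu$ iff $\lambda^+>\mu^+$ in dominance order, or $\lambda^+=\mu^+$ and $\lambda>\mu$ in dominance order ($\lambda^+$ = decreasing rearrangement; $\lambda\ge\mu$ iff $\sum_{j\le l}\lambda_j\ge\sum_{j\le l}\mu_j$ for all $l$). Fix $1\le k\le n-1$, $r\ge2$, $g=\gcd(k+1,r-1)$, $\tau=e^{2\pi\sqrt{-1}/(r-1)}$,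 specialization $(\ast)$: $t=u^{(r-1)/g}$, $q=\tau u^{-(k+1)/g}$. For $f$ a Laurent polynomial, $u_\lambda(f)=f(t^{-\rho(\lambda)_1}q^{-\lambda_1},\dots,t^{-\rho(\lambda)_n}q^{-\lambda_n})$. "Intertwined" is the equivalence relation on $P$ generated by: $\lambda\sim\omega\lambda$; and $\lambda\sim s_i\lambda$ whenever $s_i\lambda\ne\lambda$ and, at $(\ast)$, $u_\lambda(x_i/x_{i+1})\notin\{1,t,t^{-1}\}$. An enlargement of $\lambda$ is $\lambda'\in P$ with $\rho(\lambda')=\rho(\lambda)$ and $\lambda'_{i_a}-\lambda'_{i_{a+1}}>\max\{[\frac n{k+1}](r-1),\lambda_{i_a}-\lambda_{i_{a+1}}\}$ for all $1\le a\le n-1$. *)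

theory Defs
  imports Complex_Main "HOL-Computational_Algebra.Formal_Laurent_Series"
begin

(* Elements of P = Z^n are int lists of length n; coordinates are 0-based:
   coordinate j (0 <= j < n) of a list is the paper's coordinate j+1. *)

(* position a (1-based) of index i in the ordering: rho(lam)_i = (n+1)/2 - a *)
definition pos :: "int list \<Rightarrow> nat \<Rightarrow> nat" where
  "pos lam i = Suc (card {j. j < length lam \<and>
       (lam ! j > lam ! i \<or> (lam ! j = lam ! i \<and> j < i))})"

definition rho :: "int list \<Rightarrow> nat \<Rightarrow> real" where
  "rho lam i = (real (length lam) + 1) / 2 - real (pos lam i)"

(* i_a : the (0-based) index i with rho(lam)_i = (n+1)/2 - a, for 1 <= a <= n *)
definition idx :: "int list \<Rightarrow> nat \<Rightarrow> nat" where
  "idx lam a = (THE i. i < length lam \<and> rho lam i = (real (length lam) + 1) / 2 - real a)"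

definition omega :: "int list \<Rightarrow> int list" where
  "omega lam = tl lam @ [hd lam + 1]"

(* s_{i+1} in the paper's 1-based notation: swaps coordinates i and i+1 (0-based) *)
definition swp :: "nat \<Rightarrow> int list \<Rightarrow> int list" where
  "swp i lam = lam[i := lam ! (i+1), i+1 := lam ! i]"

definition dom_ge :: "int list \<Rightarrow> int list \<Rightarrow> bool" where
  "dom_ge x y \<longleftrightarrow> (\<forall>l \<le> length x. sum_list (take l x) \<ge> sum_list (take l y))"

definition dom_gt :: "int list \<Rightarrow> int list \<Rightarrow> bool" where
  "dom_gt x y \<longleftrightarrow> dom_ge x y \<and> x \<noteq> y"

definition dplus :: "int list \<Rightarrow> int list" where
  "dplus x = rev (sort x)"

definition succ_ord :: "int list \<Rightarrow> int list \<Rightarrow> bool" where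
  "succ_ord x y \<longleftrightarrow> dom_gt (dplus x) (dplus y) \<or> (dplus x = dplus y \<and> dom_gt x y)"

(* specialization (\<ast>): u is a formal variable (formal Laurent series over C) *)
definition tau :: "nat \<Rightarrow> complex" where
  "tau r = cis (2 * pi / real (r - 1))"

definition gg :: "nat \<Rightarrow> nat \<Rightarrow> nat" where
  "gg k r = gcd (k + 1) (r - 1)"

definition t_sp :: "nat \<Rightarrow> nat \<Rightarrow> complex fls" where
  "t_sp k r = fls_X powi int ((r - 1) div gg k r)"

definition q_sp :: "nat \<Rightarrow> nat \<Rightarrow> complex fls" where
  "q_sp k r = fls_const (tau r) * fls_X powi (- int ((k + 1) div gg k r))"

(* u_lam(x_i / x_{i+1}) at (\<ast>) (0-based i): 
   t^{-rho_i} q^{-lam_i} / (t^{-rho_{i+1}} q^{-lam_{i+1}})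
   = t^{rho_{i+1} - rho_i} q^{lam_{i+1} - lam_i}; rho_{i+1}-rho_i = pos_i - pos_{i+1}. *)
definition u_ratio :: "nat \<Rightarrow> nat \<Rightarrow> int list \<Rightarrow> nat \<Rightarrow> complex fls" where
  "u_ratio k r lam i =
     t_sp k r powi (int (pos lam i) - int (pos lam (i+1))) *
     q_sp k r powi (lam ! (i+1) - lam ! i)"

definition gen_rel :: "nat \<Rightarrow> nat \<Rightarrow> nat \<Rightarrow> int list \<Rightarrow> int list \<Rightarrow> bool" where
  "gen_rel n k r lam mu \<longleftrightarrow> length lam = n \<and>
     (mu = omega lam \<or>
      (\<exists>i. i + 1 < n \<and> mu = swp i lam \<and> mu \<noteq> lam \<and>
           u_ratio k r lam i \<notin> {1, t_sp k r, inverse (t_sp k r)}))"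

definition intertwined :: "nat \<Rightarrow> nat \<Rightarrow> nat \<Rightarrow> int list \<Rightarrow> int list \<Rightarrow> bool" where
  "intertwined n k r = equivclp (gen_rel n k r)"

definition enlargement :: "nat \<Rightarrow> nat \<Rightarrow> int list \<Rightarrow> int list \<Rightarrow> bool" where
  "enlargement k r lam lam' \<longleftrightarrow> length lam' = length lam \<and>
     (\<forall>i < length lam. rho lam' i = rho lam i) \<and>
     (\<forall>a. 1 \<le> a \<and> a \<le> length lam - 1 \<longrightarrow>
        lam' ! idx lam a - lam' ! idx lam (a+1) >
        max (int (length lam div (k+1)) * (int r - 1)) (lam ! idx lam a - lam ! idx lam (a+1)))"

definition step_ok :: "nat \<Rightarrow> nat \<Rightarrow> nat \<Rightarrow> int list \<Rightarrow> int list \<Rightarrow> bool" where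
  "step_ok n k r nu nu' \<longleftrightarrow>
     nu' = omega nu \<or> nu = omega nu' \<or>
     (\<exists>i. i + 1 < n \<and> nu' = swp i nu \<and> succ_ord nu' nu) \<or>
     (\<exists>i. i + 1 < n \<and> nu' = swp i nu \<and> succ_ord nu nu' \<and> intertwined n k r nu' nu)"

end

theory Submission
  imports Defs "HOL-Library.Multiset"
begin

section \<open>Swaps\<close>

lemma length_swp[simp]: "length (swp i l) = length l"
  by (simp add: swp_def)

lemma swp_nth: "i + 1 < length l \<Longrightarrow> p < length l \<Longrightarrow>
   swp i l ! p = (if p = i then l ! (i+1) else if p = i + 1 then l ! i else l ! p)"
  by (auto simp: swp_def nth_list_update)

lemma dplus_swp: "i + 1 < length l \<Longrightarrow> dplus (swp i l) = dplus l"
proof -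
  assume a: "i + 1 < length l"
  have "mset (swp i l) = mset l"
    unfolding swp_def using mset_swap[of "i+1" l i] a by simp
  then have "sort (swp i l) = sort l"
    by (metis sorted_list_of_multiset_mset)
  then show ?thesis by (simp add: dplus_def)
qed

lemma sum_take_nth: "L \<le> length xs \<Longrightarrow> sum_list (take L xs) = (\<Sum>p<L. xs ! p)"
  by (simp add: sum_list_sum_nth min_def atLeast0LessThan)

lemma dom_gt_swp:
  assumes a: "i + 1 < length l" and lt: "l ! i < l ! (i+1)"
  shows "dom_gt (swp i l) l"
proof -
  define d where "d = l ! (i+1) - l ! i"
  have dpos: "d > 0" using lt by (simp add: d_def)
  have ge: "sum_list (take L (swp i l)) \<ge> sum_list (take L l)" if L: "L \<le> length l" for L
  proof -
    have eq: "swp i l ! p = l ! p + ((if p = i then d else 0) + (if p = i + 1 then - d else 0))"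
      if "p < L" for p
      using that L a by (auto simp: swp_nth d_def)
    have "sum_list (take L (swp i l)) = (\<Sum>p<L. swp i l ! p)"
      using L by (simp add: sum_take_nth)
    also have "\<dots> = (\<Sum>p<L. l ! p) + ((\<Sum>p<L. (if p = i then d else 0)) + (\<Sum>p<L. (if p = i + 1 then - d else 0)))"
      using eq by (simp add: sum.distrib)
    also have "\<dots> = (\<Sum>p<L. l ! p) + ((if i < L then d else 0) + (if i + 1 < L then - d else 0))"
      by simp
    also have "\<dots> \<ge> (\<Sum>p<L. l ! p)" using dpos by auto
    finally show ?thesis using L by (simp add: sum_take_nth)
  qed
  have ne: "swp i l \<noteq> l"
  proof
    assume "swp i l = l"
    then have "swp i l ! i = l ! i" by simp
    then show False using a lt by (simp add: swp_nth)
  qed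
  show ?thesis unfolding dom_gt_def dom_ge_def using ge ne by simp
qed

lemma succ_swp: "i + 1 < length l \<Longrightarrow> l ! i < l ! (i+1) \<Longrightarrow> succ_ord (swp i l) l"
  unfolding succ_ord_def using dplus_swp dom_gt_swp by simp

definition sstep :: "int list \<Rightarrow> int list \<Rightarrow> bool" where
  "sstep l l' \<longleftrightarrow> (\<exists>i. i + 1 < length l \<and> l ! i < l ! (i+1) \<and> l' = swp i l)"

abbreviation SR where "SR \<equiv> sstep\<^sup>*\<^sup>*"

lemma sstep_cons: "sstep l l' \<Longrightarrow> sstep (x # l) (x # l')"
proof -
  assume "sstep l l'"
  then obtain i where i: "i + 1 < length l" "l ! i < l ! (i+1)" "l' = swp i l"
    by (auto simp: sstep_def)
  have "swp (Suc i) (x # l) = x # swp i l" by (simp add: swp_def)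
  then show ?thesis unfolding sstep_def using i
    by (intro exI[of _ "Suc i"]) auto
qed

lemma SR_cons: "SR l l' \<Longrightarrow> SR (x # l) (x # l')"
proof (induction rule: rtranclp_induct)
  case base then show ?case by simp
next
  case (step y z) then show ?case by (meson rtranclp.rtrancl_into_rtrancl sstep_cons)
qed

lemma sstep_head: "x < b \<Longrightarrow> sstep (x # b # C) (b # x # C)"
  unfolding sstep_def by (intro exI[of _ 0]) (simp add: swp_def)

lemma bubble1: "(\<forall>b\<in>set B. x < b) \<Longrightarrow> SR (x # B @ C) (B @ x # C)"
proof (induction B)
  case Nil then show ?case by simp
next
  case (Cons b B)
  have "sstep (x # b # B @ C) (b # x # B @ C)" using Cons.prems by (simp add: sstep_head)
  moreover have "SR (b # x # B @ C) (b # B @ x # C)" using Cons by (simp add: SR_cons)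
  ultimately show ?case by (simp add: converse_rtranclp_into_rtranclp)
qed

lemma bubble2: "(\<forall>b\<in>set B. b < y) \<Longrightarrow> SR (B @ y # C) (y # B @ C)"
proof (induction B)
  case Nil then show ?case by simp
next
  case (Cons b B)
  have "SR (b # B @ y # C) (b # y # B @ C)" using Cons by (simp add: SR_cons)
  moreover have "sstep (b # y # B @ C) (y # b # B @ C)" using Cons.prems by (simp add: sstep_head)
  ultimately show ?case by (simp add: rtranclp.rtrancl_into_rtrancl)
qed

section \<open>Good flagged lists\<close>

fun good :: "(int \<times> bool) list \<Rightarrow> bool" where
  "good [] = True"
| "good (z # zs) = (good zs \<and> (if snd z then (\<forall>w\<in>set zs. \<not> snd w \<longrightarrow> fst w \<le> fst z)
                                  else (\<forall>w\<in>set zs. snd w \<longrightarrow> fst z < fst w)))"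

definition gf :: "int \<times> bool \<Rightarrow> int" where "gf z = (if snd z then fst z + 1 else fst z)"

lemma step1: "good zs \<Longrightarrow>
  SR (map fst zs) (map fst (filter snd zs) @ map fst (filter (\<lambda>z. \<not> snd z) zs))"
proof (induction zs)
  case Nil then show ?case by simp
next
  case (Cons z zs)
  let ?T = "map fst (filter snd zs)" and ?F = "map fst (filter (\<lambda>z. \<not> snd z) zs)"
  have IH: "SR (fst z # map fst zs) (fst z # ?T @ ?F)" using Cons by (simp add: SR_cons)
  show ?case
  proof (cases "snd z")
    case True then show ?thesis using IH by simp
  next
    case False
    have "\<forall>b\<in>set ?T. fst z < b" using Cons.prems False by auto
    then have "SR (fst z # ?T @ ?F) (?T @ fst z # ?F)" by (rule bubble1)
    then show ?thesis using IH False by simp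
  qed
qed

lemma step3: "good zs \<Longrightarrow>
  SR (map fst (filter (\<lambda>z. \<not> snd z) zs) @ map (\<lambda>x. x + 1) (map fst (filter snd zs))) (map gf zs)"
proof (induction zs)
  case Nil then show ?case by simp
next
  case (Cons z zs)
  let ?T = "map (\<lambda>x. x + 1) (map fst (filter snd zs))" and ?F = "map fst (filter (\<lambda>z. \<not> snd z) zs)"
  have IH: "SR (x # ?F @ ?T) (x # map gf zs)" for x using Cons by (simp add: SR_cons)
  show ?case
  proof (cases "snd z")
    case True
    have "\<forall>b\<in>set ?F. b < fst z + 1" using Cons.prems True by auto
    then have X: "SR (?F @ (fst z + 1) # ?T) ((fst z + 1) # ?F @ ?T)" by (rule bubble2)
    have Y: "SR (?F @ (fst z + 1) # ?T) ((fst z + 1) # map gf zs)"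
      by (rule rtranclp_trans[OF X IH])
    have e1: "map fst (filter (\<lambda>z. \<not> snd z) (z#zs)) @ map (\<lambda>x. x+1) (map fst (filter snd (z#zs))) = ?F @ (fst z + 1) # ?T"
      using True by simp
    have e2: "map gf (z#zs) = (fst z + 1) # map gf zs" using True by (simp add: gf_def)
    show ?thesis unfolding e1 e2 by (rule Y)
  next
    case False then show ?thesis using IH[of "fst z"] by (simp add: gf_def[of z])
  qed
qed

lemma omega_pow: "length A = j \<Longrightarrow> (omega ^^ j) (A @ B) = B @ map (\<lambda>x. x + 1) A"
proof (induction A arbitrary: j B)
  case Nil then show ?case by simp
next
  case (Cons a A)
  then obtain j' where j: "j = Suc j'" "length A = j'" by auto
  have "(omega ^^ j) ((a # A) @ B) = (omega ^^ j') (omega (a # A @ B))"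
    by (simp only: j funpow_Suc_right o_apply append_Cons)
  also have "omega (a # A @ B) = A @ (B @ [a + 1])" by (simp add: omega_def)
  also have "(omega ^^ j') (A @ (B @ [a + 1])) = (B @ [a+1]) @ map (\<lambda>x. x + 1) A"
    using Cons.IH j by simp
  finally show ?case by simp
qed

section \<open>The reachability relation\<close>

context
  fixes n k r :: nat
begin

abbreviation Rn where "Rn \<equiv> (step_ok n k r)\<^sup>*\<^sup>*"

lemma SR_Rn: "SR l l' \<Longrightarrow> length l = n \<Longrightarrow> Rn l l'"
proof (induction rule: rtranclp_induct)
  case base then show ?case by simp
next
  case (step y z)
  have ly: "length y = n"
    using step.hyps(1) step.prems
    by (induction rule: rtranclp_induct) (auto simp: sstep_def)
  obtain i where i: "i + 1 < length y" "y ! i < y ! (i+1)" "z = swp i y"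
    using step.hyps(2) by (auto simp: sstep_def)
  have "step_ok n k r y z" unfolding step_ok_def using i ly succ_swp by blast
  then show ?case using step by (meson rtranclp.rtrancl_into_rtrancl)
qed

lemma omega_Rn: "Rn l ((omega ^^ j) l) \<and> Rn ((omega ^^ j) l) l"
proof (induction j)
  case 0 then show ?case by simp
next
  case (Suc j)
  have "step_ok n k r ((omega ^^ j) l) (omega ((omega ^^ j) l))" by (simp add: step_ok_def)
  moreover have "step_ok n k r (omega ((omega ^^ j) l)) ((omega ^^ j) l)" by (simp add: step_ok_def)
  moreover have "(omega ^^ Suc j) l = omega ((omega ^^ j) l)" by simp
  ultimately show ?case using Suc
    by (metis converse_rtranclp_into_rtranclp rtranclp.rtrancl_into_rtrancl)
qed

lemma length_omega[simp]: "l \<noteq> [] \<Longrightarrow> length (omega l) = length l"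
  by (simp add: omega_def)

lemma lemmaA: "good zs \<Longrightarrow> length zs = n \<Longrightarrow> Rn (map fst zs) (map gf zs)"
proof -
  assume g: "good zs" and len: "length zs = n"
  let ?T = "map fst (filter snd zs)" and ?F = "map fst (filter (\<lambda>z. \<not> snd z) zs)"
  have lenTF: "length (?T @ ?F) = n"
    using len sum_length_filter_compl[of snd zs] by (simp add: o_def)
  have 1: "Rn (map fst zs) (?T @ ?F)" using SR_Rn[OF step1[OF g]] len by simp
  have "(omega ^^ length ?T) (?T @ ?F) = ?F @ map (\<lambda>x. x + 1) ?T" by (rule omega_pow) simp
  then have 2: "Rn (?T @ ?F) (?F @ map (\<lambda>x. x + 1) ?T)" using omega_Rn by metis
  have 3: "Rn (?F @ map (\<lambda>x. x + 1) ?T) (map gf zs)"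
    using SR_Rn[OF step3[OF g]] lenTF by simp
  show ?thesis using 1 2 3 by (meson rtranclp_trans)
qed

lemma shift1: "length l = n \<Longrightarrow> Rn l (map (\<lambda>x. x + 1) l) \<and> Rn (map (\<lambda>x. x + 1) l) l"
  using omega_Rn[of l n] omega_pow[of l n "[]"] by simp

lemma shift_up: "length l = n \<Longrightarrow> Rn l (map (\<lambda>x. x + int j) l)"
proof (induction j)
  case 0 then show ?case by simp
next
  case (Suc j)
  have "Rn (map (\<lambda>x. x + int j) l) (map (\<lambda>x. x + 1) (map (\<lambda>x. x + int j) l))"
    using shift1[of "map (\<lambda>x. x + int j) l"] Suc.prems by simp
  moreover have "map (\<lambda>x. x + 1) (map (\<lambda>x. x + int j) l) = map (\<lambda>x. x + int (Suc j)) l" by (simp add: o_def)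
  ultimately show ?case using Suc by (metis rtranclp_trans)
qed

lemma shift_down: "length l = n \<Longrightarrow> Rn l (map (\<lambda>x. x - int j) l)"
proof (induction j)
  case 0 then show ?case by simp
next
  case (Suc j)
  have e: "map (\<lambda>x. x + 1) (map (\<lambda>x. x - int (Suc j)) l) = map (\<lambda>x. x - int j) l" by (simp add: o_def)
  have "Rn (map (\<lambda>x. x + 1) (map (\<lambda>x. x - int (Suc j)) l)) (map (\<lambda>x. x - int (Suc j)) l)"
    using shift1[of "map (\<lambda>x. x - int (Suc j)) l"] Suc.prems by simp
  then show ?case using Suc e by (metis rtranclp_trans)
qed

lemma shift: "length l = n \<Longrightarrow> Rn l (map (\<lambda>x. x + m) l)"
proof (cases "m \<ge> 0")
  case True
  then have "m = int (nat m)" by simp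
  then show "length l = n \<Longrightarrow> ?thesis" using shift_up[of l "nat m"] by metis
next
  case False
  then have "m = - int (nat (- m))" by simp
  then have "(\<lambda>x. x + m) = (\<lambda>x. x - int (nat (- m)))" by (metis diff_conv_add_uminus)
  then show "length l = n \<Longrightarrow> ?thesis" using shift_down[of l "nat (- m)"] by metis
qed

end

section \<open>Positions\<close>

definition abv :: "int list \<Rightarrow> nat \<Rightarrow> nat \<Rightarrow> bool" where
  "abv mu j i \<longleftrightarrow> (mu ! i < mu ! j \<or> (mu ! j = mu ! i \<and> j < i))"

lemma pos_abv: "pos lam i = Suc (card {j. j < length lam \<and> abv lam j i})"
  unfolding pos_def abv_def by (simp add: eq_commute)

lemma abv_trans: "abv mu a b \<Longrightarrow> abv mu b c \<Longrightarrow> abv mu a c"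
  unfolding abv_def by auto

lemma abv_total: "i \<noteq> j \<Longrightarrow> abv mu i j \<or> abv mu j i"
  unfolding abv_def by auto

lemma abv_irrefl: "\<not> abv mu i i"
  unfolding abv_def by auto

lemma pos_le: "i < length lam \<Longrightarrow> pos lam i \<le> length lam"
proof -
  assume i: "i < length lam"
  have "{j. j < length lam \<and> abv lam j i} \<subseteq> {..<length lam} - {i}"
    using abv_irrefl by auto
  then have "card {j. j < length lam \<and> abv lam j i} \<le> card ({..<length lam} - {i})"
    by (intro card_mono) auto
  also have "\<dots> = length lam - 1" using i by simp
  finally show ?thesis using i by (simp add: pos_abv)
qed

lemma pos_lt: "abv lam j i \<Longrightarrow> j < length lam \<Longrightarrow> pos lam j < pos lam i"
proof -
  assume a: "abv lam j i" and j: "j < length lam"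
  have "{x. x < length lam \<and> abv lam x j} \<subset> {x. x < length lam \<and> abv lam x i}"
    using a j abv_trans abv_irrefl by blast
  then have "card {x. x < length lam \<and> abv lam x j} < card {x. x < length lam \<and> abv lam x i}"
    by (intro psubset_card_mono) auto
  then show ?thesis by (simp add: pos_abv)
qed

lemma pos_inj: "inj_on (pos lam) {..<length lam}"
proof (rule inj_onI)
  fix i j assume i: "i \<in> {..<length lam}" and j: "j \<in> {..<length lam}" and e: "pos lam i = pos lam j"
  show "i = j"
  proof (rule ccontr)
    assume "i \<noteq> j"
    then have "abv lam i j \<or> abv lam j i" by (rule abv_total)
    then show False using pos_lt i j e by fastforce
  qed
qed

lemma pos_image: "pos lam ` {..<length lam} = {1..length lam}"
proof -
  have sub: "pos lam ` {..<length lam} \<subseteq> {1..length lam}"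
    using pos_le by (auto simp: pos_abv)
  have "card (pos lam ` {..<length lam}) = length lam"
    using card_image[OF pos_inj] by simp
  then show ?thesis using sub by (intro card_subset_eq) auto
qed

lemma idx_pos: "i < length lam \<Longrightarrow> idx lam (pos lam i) = i"
proof -
  assume i: "i < length lam"
  show ?thesis unfolding idx_def
  proof (rule the_equality)
    show "i < length lam \<and> rho lam i = (real (length lam) + 1) / 2 - real (pos lam i)"
      using i by (simp add: rho_def)
  next
    fix i' assume h: "i' < length lam \<and> rho lam i' = (real (length lam) + 1) / 2 - real (pos lam i)"
    then have "pos lam i' = pos lam i" by (simp add: rho_def)
    then show "i' = i" using pos_inj[of lam] h i by (auto dest: inj_onD)
  qed
qed

lemma chain_dec:
  fixes f :: "nat \<Rightarrow> int"
  assumes dec: "\<forall>a. 1 \<le> a \<and> a \<le> N - 1 \<longrightarrow> f (a+1) < f a"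
    and p: "1 \<le> p" and pq: "p \<le> q" and qN: "q \<le> N"
  shows "f q \<le> f p"
proof -
  have "p + d \<le> N \<longrightarrow> f (p + d) \<le> f p" for d
  proof (induction d)
    case 0 then show ?case by simp
  next
    case (Suc d)
    show ?case
    proof
      assume h: "p + Suc d \<le> N"
      then have "f (p + d + 1) < f (p + d)" using dec p by auto
      then show "f (p + Suc d) \<le> f p" using Suc h by simp
    qed
  qed
  then show ?thesis using pq qN by (metis le_add_diff_inverse)
qed

lemma enl_compat:
  assumes e: "enlargement k r lam lam'" and i: "i < length lam" and j: "j < length lam"
    and a: "abv lam j i"
  shows "lam' ! i - lam ! i \<le> lam' ! j - lam ! j"
proof -
  define f where "f a = lam' ! idx lam a - lam ! idx lam a" for a
  have dec: "\<forall>a. 1 \<le> a \<and> a \<le> length lam - 1 \<longrightarrow> f (a+1) < f a"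
    using e unfolding enlargement_def f_def by auto
  have "pos lam j < pos lam i" using pos_lt a j by simp
  moreover have "1 \<le> pos lam j" by (simp add: pos_abv)
  moreover have "pos lam i \<le> length lam" using pos_le i by simp
  ultimately have "f (pos lam i) \<le> f (pos lam j)" using chain_dec[OF dec, of "pos lam j" "pos lam i"] by simp
  then show ?thesis using idx_pos i j by (simp add: f_def)
qed

context
  fixes n k r :: nat
begin

lemma iter: "\<forall>mu D. length mu = n \<longrightarrow> (\<forall>i<n. 0 \<le> D i) \<longrightarrow>
   (\<forall>i<n. \<forall>j<n. abv mu j i \<longrightarrow> D i \<le> D j) \<longrightarrow> nat (\<Sum>i<n. D i) = s \<longrightarrow>
   Rn n k r mu (map (\<lambda>i. mu ! i + D i) [0..<n])"
proof (induction s rule: less_induct)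
  case (less s)
  show ?case
  proof (intro allI impI)
    fix mu and D :: "nat \<Rightarrow> int"
    assume len: "length mu = n" and nn: "\<forall>i<n. 0 \<le> D i"
      and cp: "\<forall>i<n. \<forall>j<n. abv mu j i \<longrightarrow> D i \<le> D j" and s: "nat (\<Sum>i<n. D i) = s"
    show "Rn n k r mu (map (\<lambda>i. mu ! i + D i) [0..<n])"
    proof (cases "\<forall>i<n. D i = 0")
      case True
      then have "map (\<lambda>i. mu ! i + D i) [0..<n] = mu" using len
        by (intro nth_equalityI) auto
      then show ?thesis by simp
    next
      case False
      then obtain i0 where i0: "i0 < n" "D i0 > 0" using nn by force
      define fl where "fl i = (0 < D i)" for i
      define mu1 where "mu1 = map (\<lambda>i. mu ! i + (if fl i then 1 else 0)) [0..<n]"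
      define D1 where "D1 i = D i - (if fl i then 1 else 0)" for i
      define zs where "zs = zip mu (map fl [0..<n])"
      have lz: "length zs = n" using len by (simp add: zs_def)
      have zsn: "zs ! p = (mu ! p, fl p)" if "p < n" for p using that len by (simp add: zs_def)
      have good_zs: "good zs"
      proof -
        have gpos: "good ys" if "\<forall>p q. p < q \<longrightarrow> q < length ys \<longrightarrow>
          (snd (ys!p) \<and> \<not> snd (ys!q) \<longrightarrow> fst (ys!q) \<le> fst (ys!p)) \<and>
          (\<not> snd (ys!p) \<and> snd (ys!q) \<longrightarrow> fst (ys!p) < fst (ys!q))" for ys
          using that
        proof (induction ys)
          case Nil then show ?case by simp
        next
          case (Cons y ys)
          have t: "good ys"
          proof (rule Cons.IH, intro allI impI)
            fix p q assume "p < q" "q < length ys"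
            then show "(snd (ys!p) \<and> \<not> snd (ys!q) \<longrightarrow> fst (ys!q) \<le> fst (ys!p)) \<and>
              (\<not> snd (ys!p) \<and> snd (ys!q) \<longrightarrow> fst (ys!p) < fst (ys!q))"
              using Cons.prems[rule_format, of "Suc p" "Suc q"] by simp
          qed
          have h: "(snd y \<and> \<not> snd w \<longrightarrow> fst w \<le> fst y) \<and> (\<not> snd y \<and> snd w \<longrightarrow> fst y < fst w)"
            if "w \<in> set ys" for w
          proof -
            obtain q where q: "q < length ys" "w = ys ! q" using \<open>w \<in> set ys\<close> by (auto simp: in_set_conv_nth)
            show ?thesis using Cons.prems[rule_format, of 0 "Suc q"] q by simp
          qed
          show ?case using t h by auto
        qed
        show ?thesis
        proof (rule gpos, intro allI impI)
          fix p q assume pq: "p < q" "q < length zs"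
          then have p: "p < n" "q < n" using lz by auto
          have A: "\<not> (fl p \<and> \<not> fl q \<and> mu ! p < mu ! q)"
          proof
            assume h: "fl p \<and> \<not> fl q \<and> mu ! p < mu ! q"
            then have "abv mu q p" by (simp add: abv_def)
            then have "D p \<le> D q" using cp p by auto
            then show False using h nn p by (auto simp: fl_def)
          qed
          have B: "\<not> (\<not> fl p \<and> fl q \<and> mu ! q \<le> mu ! p)"
          proof
            assume h: "\<not> fl p \<and> fl q \<and> mu ! q \<le> mu ! p"
            then have "abv mu p q" using pq by (auto simp: abv_def)
            then have "D q \<le> D p" using cp p by auto
            then show False using h nn p by (auto simp: fl_def)
          qed
          show "(snd (zs!p) \<and> \<not> snd (zs!q) \<longrightarrow> fst (zs!q) \<le> fst (zs!p)) \<and>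
              (\<not> snd (zs!p) \<and> snd (zs!q) \<longrightarrow> fst (zs!p) < fst (zs!q))"
            using A B zsn p by auto
        qed
      qed
      have "Rn n k r (map fst zs) (map gf zs)" using lemmaA good_zs lz by blast
      moreover have "map fst zs = mu" using len by (simp add: zs_def)
      moreover have "map gf zs = mu1" using len lz zsn
        by (intro nth_equalityI) (auto simp: mu1_def gf_def)
      ultimately have R1: "Rn n k r mu mu1" by simp
      have len1: "length mu1 = n" by (simp add: mu1_def)
      have mu1n: "mu1 ! i = mu ! i + (if fl i then 1 else 0)" if "i < n" for i
        using that by (simp add: mu1_def)
      have nn1: "\<forall>i<n. 0 \<le> D1 i" using nn by (auto simp: D1_def fl_def)
      have cp1: "\<forall>i<n. \<forall>j<n. abv mu1 j i \<longrightarrow> D1 i \<le> D1 j"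
      proof (intro allI impI)
        fix i j assume ij: "i < n" "j < n" and a: "abv mu1 j i"
        show "D1 i \<le> D1 j"
        proof (cases "fl j \<and> \<not> fl i")
          case True then show ?thesis using nn ij by (auto simp: D1_def fl_def)
        next
          case False
          then have "abv mu j i" using a mu1n ij by (auto simp: abv_def split: if_splits)
          then have "D i \<le> D j" using cp ij by auto
          then show ?thesis using False nn ij by (auto simp: D1_def fl_def)
        qed
      qed
      have lt: "(\<Sum>i<n. D1 i) < (\<Sum>i<n. D i)"
      proof (rule sum_strict_mono_ex1)
        show "\<forall>x\<in>{..<n}. D1 x \<le> D x" by (auto simp: D1_def)
        show "\<exists>a\<in>{..<n}. D1 a < D a" using i0 by (auto simp: D1_def fl_def)
      qed simp
      have s1: "0 \<le> (\<Sum>i<n. D1 i)" using nn1 by (intro sum_nonneg) auto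
      then have "nat (\<Sum>i<n. D1 i) < s" using lt s by linarith
      then have R2: "Rn n k r mu1 (map (\<lambda>i. mu1 ! i + D1 i) [0..<n])"
        using less.IH len1 nn1 cp1 by blast
      have "map (\<lambda>i. mu1 ! i + D1 i) [0..<n] = map (\<lambda>i. mu ! i + D i) [0..<n]"
        using mu1n by (auto simp: D1_def)
      then show ?thesis using R1 R2 by (metis rtranclp_trans)
    qed
  qed
qed

end

lemma rtranclp_list: "P\<^sup>*\<^sup>* a b \<Longrightarrow> \<exists>nus. nus \<noteq> [] \<and> hd nus = a \<and> last nus = b \<and>
   (\<forall>i. i + 1 < length nus \<longrightarrow> P (nus ! i) (nus ! (i+1)))"
proof (induction rule: converse_rtranclp_induct)
  case base then show ?case by (intro exI[of _ "[b]"]) simp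
next
  case (step y z)
  then obtain nus where nus: "nus \<noteq> []" "hd nus = z" "last nus = b"
    "\<forall>i. i + 1 < length nus \<longrightarrow> P (nus ! i) (nus ! (i+1))" by blast
  show ?case
  proof (intro exI[of _ "y # nus"] conjI allI impI)
    fix i assume "i + 1 < length (y # nus)"
    then show "P ((y # nus) ! i) ((y # nus) ! (i+1))"
      using nus step.hyps(1) by (cases i) (auto simp: hd_conv_nth)
  qed (use nus in auto)
qed

theorem proposition4p1:
  fixes n k r :: nat and lam lam' :: "int list"
  assumes "1 \<le> k" and "k \<le> n - 1" and "2 \<le> r"
    and "length lam = n"
    and "enlargement k r lam lam'"
  shows "\<exists>nus :: int list list. nus \<noteq> [] \<and> hd nus = lam \<and> last nus = lam' \<and>
           (\<forall>a. a + 1 < length nus \<longrightarrow> step_ok n k r (nus ! a) (nus ! (a+1)))"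
proof -
  note len = assms(4) and e = assms(5)
  have len': "length lam' = n" using e len by (simp add: enlargement_def)
  define D0 where "D0 i = lam' ! i - lam ! i" for i
  define m where "m = - (\<Sum>i<n. \<bar>D0 i\<bar>)"
  define lams where "lams = map (\<lambda>x. x + m) lam"
  define D where "D i = D0 i - m" for i
  have R1: "Rn n k r lam lams" unfolding lams_def using shift len by blast
  have lens: "length lams = n" using len by (simp add: lams_def)
  have nn: "\<forall>i<n. 0 \<le> D i"
  proof (intro allI impI)
    fix i assume "i < n"
    then have "\<bar>D0 i\<bar> \<le> (\<Sum>i<n. \<bar>D0 i\<bar>)" by (intro member_le_sum) auto
    then show "0 \<le> D i" by (simp add: D_def m_def)
  qed
  have cp: "\<forall>i<n. \<forall>j<n. abv lams j i \<longrightarrow> D i \<le> D j"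
  proof (intro allI impI)
    fix i j assume ij: "i < n" "j < n" and a: "abv lams j i"
    then have "abv lam j i" using len by (simp add: abv_def lams_def)
    then have "D0 i \<le> D0 j" using enl_compat[OF e] ij len by (simp add: D0_def)
    then show "D i \<le> D j" by (simp add: D_def)
  qed
  have R2: "Rn n k r lams (map (\<lambda>i. lams ! i + D i) [0..<n])"
    using iter lens nn cp by blast
  have "map (\<lambda>i. lams ! i + D i) [0..<n] = lam'"
    using len len' by (intro nth_equalityI) (auto simp: lams_def D_def D0_def)
  then have "Rn n k r lam lam'" using R1 R2 by (metis rtranclp_trans)
  then show ?thesis by (rule rtranclp_list)
qed

end
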